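(* Let $R$ be a unital ring and let $(P,Q,\psi)$ be a unital $R$-system satisfying Condition (FS'). Let $\mathcal{T}_{(P,Q,\psi)}=\bigoplus_i\mathcal{T}_i$ be its Toeplitz ring, and define $\epsilon_0=\iota_R(1_R)$ and, for $i>0$, $\epsilon_i=\pi_{\iota_Q^i,\iota_P^i}(\mathrm{id}_{Q^{\otimes i}})\in\mathcal{T}_i\mathcal{T}_{-i}$. Then for every $i\ge0$: $\epsilon_is=s$ for all $s\in\mathcal{T}_i$, and $t\epsilon_i=t$ for all $t\in\mathcal{T}_{-i}$. Consequently $\mathcal{T}_i\mathcal{T}_{-i}$ is a unital ideal of $\mathcal{T}_0$ with multiplicative identity $\epsilon_i$, for every $i\ge0$.
   Context: For additive subsets $X,Y$ of a ring, $XY$ is the additive subgroup generated by products. An $R$-system is a triple $(P,Q,\psi)$ with $P,Q$ $R$-bimodules and $\psi:P\otimes_RQ\to R$ an $R$-bimodule homomorphism; it is unital if $R$ is unital and $1_R$ acts as identity on both sides of $P$ and $Q$. Put $P^{\otimes0}=Q^{\otimes0}=R$, $\psi_0(r\otimes r')=rr'$, $\psi_1=\psi$, and for $n>1$: $Q^{\otimes n}=Q^{\otimes(n-1)}\otimes_RQ$, $P^{\otimes n}=P\otimes_RP^{\otimes(n-1)}$, $\psi_n((p_1\otimes p_2)\otimes(q_2\otimes q_1))=\psi(p_1\psi_{n-1}(p_2\otimes q_2)\otimes q_1)$; $(P^{\otimes n},Q^{\otimes n},\psi_n)$ is again an $R$-system. For an $R$-system $(P,Q,\psi)$ and $q\in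 Q,p\in P$ let $\theta_{q,p}(x)=q\psi(p\otimes x)$ ($x\in Q$), $\theta_{p,q}(y)=\psi(y\otimes q)p$ ($y\in P$); $\mathcal{F}_P(Q)$, $\mathcal{F}_Q(P)$ are the additive groups generated by these maps. Condition (FS'): there exist $\Theta\in\mathcal{F}_P(Q)$, $\Phi\in\mathcal{F}_Q(P)$ with $\Theta(q)=q$, $\Phi(p)=p$ for all $q,p$. If $(P,Q,\psi)$ satisfies (FS'), so does each $(P^{\otimes n},Q^{\otimes n},\psi_n)$, and $\mathrm{id}_{Q^{\otimes n}}\in\mathcal{F}_{P^{\otimes n}}(Q^{\otimes n})$ in the unital case. A covariant representation of $(P,Q,\psi)$ is a tuple $(S,T,\sigma,B)$ with $B$ a ring, $S:P\to B$, $T:Q\to B$ additive maps, $\sigma:R\to B$ a ring homomorphism, with $S(pr)=S(p)\sigma(r)$, $S(rp)=\sigma(r)S(p)$, $T(qr)=T(q)\sigma(r)$, $T(rq)=\sigma(r)T(q)$, $\sigma(\psi(p\otimes q))=S(p)T(q)$; then with $S^n(p_1\otimes\cdots\otimes p_n)=S(p_1)\cdots S(p_n)$, $T^n(q_1\otimes\cdots\otimes q_n)=T(q_1)\cdots T(q_n)$, $(S^n,T^n,\sigma,B)$ is a covariant representation of $(P^{\otimes n},Q^{\otimes n},\psi_n)$, and there is a unique ring homomorphism $\pi_{T^n,S^n}:\mathcal{F}_{P^{\otimes n}}(Q^{\otimes n})\to B$ with $\pi_{T^n,S^n}(\theta_{q,p})=T^n(q)S^n(p)$. The Toeplitz representation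 $(\iota_P,\iota_Q,\iota_R,\mathcal{T}_{(P,Q,\psi)})$ is the universal covariant representation; its $\mathbb{Z}$-grading is $\mathcal{T}_i$ = additive group generated by the elements $\iota_Q^m(q)\iota_P^n(p)$ and $\iota_R(r)\iota_Q^m(q)\iota_P^n(p)$ for $q\in Q^{\otimes m}$, $p\in P^{\otimes n}$, $m-n=i$ (with $\iota^0=\iota_R$). *)

theory Defs
  imports Main "HOL-Library.Poly_Mapping"
begin

text \<open>The bimodule homomorphism
psi : P (x)_R Q -> R is given, via the universal property of the balanced tensor
product, as an R-balanced biadditive map that is left R-linear in P and right
R-linear in Q.\<close>

record ('r, 'p, 'q) rsys =
  lP  :: "'r \<Rightarrow> 'p \<Rightarrow> 'p"
  rP  :: "'p \<Rightarrow> 'r \<Rightarrow> 'p"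
  lQ  :: "'r \<Rightarrow> 'q \<Rightarrow> 'q"
  rQ  :: "'q \<Rightarrow> 'r \<Rightarrow> 'q"
  psi :: "'p \<Rightarrow> 'q \<Rightarrow> 'r"

definition bimodule :: "('r::ring_1 \<Rightarrow> 'm::ab_group_add \<Rightarrow> 'm) \<Rightarrow> ('m \<Rightarrow> 'r \<Rightarrow> 'm) \<Rightarrow> bool" where
  "bimodule l rt \<longleftrightarrow>
     (\<forall>r x y. l r (x + y) = l r x + l r y) \<and>
     (\<forall>r s x. l (r + s) x = l r x + l s x) \<and>
     (\<forall>r s x. l (r * s) x = l r (l s x)) \<and>
     (\<forall>r x y. rt (x + y) r = rt x r + rt y r) \<and>
     (\<forall>r s x. rt x (r + s) = rt x r + rt x s) \<and>
     (\<forall>r s x. rt x (r * s) = rt (rt x r) s) \<and>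
     (\<forall>r s x. l r (rt x s) = rt (l r x) s)"

definition unital_bimodule :: "('r::ring_1 \<Rightarrow> 'm::ab_group_add \<Rightarrow> 'm) \<Rightarrow> ('m \<Rightarrow> 'r \<Rightarrow> 'm) \<Rightarrow> bool" where
  "unital_bimodule l rt \<longleftrightarrow> bimodule l rt \<and> (\<forall>x. l 1 x = x) \<and> (\<forall>x. rt x 1 = x)"

definition psi_bimod_hom :: "('r::ring_1, 'p::ab_group_add, 'q::ab_group_add) rsys \<Rightarrow> bool" where
  "psi_bimod_hom S \<longleftrightarrow>
     (\<forall>p p' q. psi S (p + p') q = psi S p q + psi S p' q) \<and>
     (\<forall>p q q'. psi S p (q + q') = psi S p q + psi S p q') \<and>
     (\<forall>p r q. psi S (rP S p r) q = psi S p (lQ S r q)) \<and>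
     (\<forall>r p q. psi S (lP S r p) q = r * psi S p q) \<and>
     (\<forall>p q r. psi S p (rQ S q r) = psi S p q * r)"

text \<open>A unital R-system (R is unital because 'r is of class ring_1).\<close>
definition unital_rsystem :: "('r::ring_1, 'p::ab_group_add, 'q::ab_group_add) rsys \<Rightarrow> bool" where
  "unital_rsystem S \<longleftrightarrow> unital_bimodule (lP S) (rP S) \<and> unital_bimodule (lQ S) (rQ S)
      \<and> psi_bimod_hom S"

inductive_set FPQ :: "('r::ring_1, 'p::ab_group_add, 'q::ab_group_add) rsys \<Rightarrow> ('q \<Rightarrow> 'q) set"
  for S where
  zero: "(\<lambda>x. 0) \<in> FPQ S"
| gen: "(\<lambda>x. rQ S q (psi S p x)) \<in> FPQ S"
| add: "f \<in> FPQ S \<Longrightarrow> g \<in> FPQ S \<Longrightarrow> (\<lambda>x. f x + g x) \<in> FPQ S"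
| neg: "f \<in> FPQ S \<Longrightarrow> (\<lambda>x. - f x) \<in> FPQ S"

inductive_set FQP :: "('r::ring_1, 'p::ab_group_add, 'q::ab_group_add) rsys \<Rightarrow> ('p \<Rightarrow> 'p) set"
  for S where
  zero: "(\<lambda>y. 0) \<in> FQP S"
| gen: "(\<lambda>y. lP S (psi S y q) p) \<in> FQP S"
| add: "f \<in> FQP S \<Longrightarrow> g \<in> FQP S \<Longrightarrow> (\<lambda>y. f y + g y) \<in> FQP S"
| neg: "f \<in> FQP S \<Longrightarrow> (\<lambda>y. - f y) \<in> FQP S"

definition FS' :: "('r::ring_1, 'p::ab_group_add, 'q::ab_group_add) rsys \<Rightarrow> bool" where
  "FS' S \<longleftrightarrow> (\<exists>\<Theta>\<in>FPQ S. \<forall>q. \<Theta> q = q) \<and> (\<exists>\<Phi>\<in>FQP S. \<forall>p. \<Phi> p = p)"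

text \<open>Elementary tensors of P^{(x)n} are lists [p1,...,pn] (meaning p1 (x) ... (x) pn),
of Q^{(x)n} lists [q1,...,qn]. The pairing psi_n of the paper:
psi_n((p1 (x) p') (x) (q' (x) qn)) = psi(p1 psi_{n-1}(p' (x) q') (x) qn).\<close>
primrec psi_list :: "('r::ring_1, 'p, 'q) rsys \<Rightarrow> 'p list \<Rightarrow> 'q list \<Rightarrow> 'r" where
  "psi_list S [] qs = 1"
| "psi_list S (p # ps) qs =
     (if ps = [] then psi S p (last qs)
      else psi S (rP S p (psi_list S ps (butlast qs))) (last qs))"

definition rQ_list :: "('r, 'p, 'q) rsys \<Rightarrow> 'q list \<Rightarrow> 'r \<Rightarrow> 'q list" where
  "rQ_list S qs r = butlast qs @ [rQ S (last qs) r]"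

text \<open>Q^{(x)n} is the free abelian group on n-tuples (lists of length n) modulo the
subgroup generated by the multi-additivity and R-balancing relations.\<close>
inductive_set tens_rel :: "('r::ring_1, 'p, 'q::ab_group_add) rsys \<Rightarrow> nat \<Rightarrow> ('q list \<Rightarrow>\<^sub>0 int) set"
  for S n where
  additive: "length (us @ a # vs) = n \<Longrightarrow>
     Poly_Mapping.single (us @ (a + b) # vs) 1 - Poly_Mapping.single (us @ a # vs) 1
       - Poly_Mapping.single (us @ b # vs) 1 \<in> tens_rel S n"
| balanced: "length (us @ a # b # vs) = n \<Longrightarrow>
     Poly_Mapping.single (us @ rQ S a r # b # vs) 1
       - Poly_Mapping.single (us @ a # lQ S r b # vs) 1 \<in> tens_rel S n"
| zero: "0 \<in> tens_rel S n"
| add: "x \<in> tens_rel S n \<Longrightarrow> y \<in> tens_rel S n \<Longrightarrow> x + y \<in> tens_rel S n"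
| neg: "x \<in> tens_rel S n \<Longrightarrow> - x \<in> tens_rel S n"

text \<open>Elements of F_{P^{(x)n}}(Q^{(x)n}) (n > 0) together with their image under
pi_{T^n,S^n}. An operator is recorded by its values on elementary tensors of
length n (representatives in the free abelian group). The generators are
theta_{q,p} with q, p elementary (these generate the same additive group as
theta_{q,p} with arbitrary q, p, by biadditivity of theta); pi sends theta_{q,p}
to T^n(q) S^n(p).\<close>
fun lprod :: "'a::semigroup_mult list \<Rightarrow> 'a" where
  "lprod [] = undefined"
| "lprod [x] = x"
| "lprod (x # y # ys) = x * lprod (y # ys)"

inductive Fpi :: "('r::ring_1, 'p::ab_group_add, 'q::ab_group_add) rsys \<Rightarrow> nat \<Rightarrow>
    ('q \<Rightarrow> 'b::ring) \<Rightarrow> ('p \<Rightarrow> 'b) \<Rightarrow> ('q list \<Rightarrow> ('q list \<Rightarrow>\<^sub>0 int)) \<Rightarrow> 'b \<Rightarrow> bool"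
  for S n iQ iP where
  zero: "Fpi S n iQ iP (\<lambda>xs. 0) 0"
| gen: "length qs = n \<Longrightarrow> length ps = n \<Longrightarrow>
     Fpi S n iQ iP (\<lambda>xs. Poly_Mapping.single (rQ_list S qs (psi_list S ps xs)) 1)
                   (lprod (map iQ qs) * lprod (map iP ps))"
| add: "Fpi S n iQ iP f a \<Longrightarrow> Fpi S n iQ iP g b \<Longrightarrow> Fpi S n iQ iP (\<lambda>xs. f xs + g xs) (a + b)"
| neg: "Fpi S n iQ iP f a \<Longrightarrow> Fpi S n iQ iP (\<lambda>xs. - f xs) (- a)"

definition eps :: "('r::ring_1, 'p::ab_group_add, 'q::ab_group_add) rsys \<Rightarrow>
    ('r \<Rightarrow> 'b::ring) \<Rightarrow> ('q \<Rightarrow> 'b) \<Rightarrow> ('p \<Rightarrow> 'b) \<Rightarrow> nat \<Rightarrow> 'b" where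
  "eps S iR iQ iP i =
     (if i = 0 then iR 1
      else (SOME e. \<exists>\<Theta>. Fpi S i iQ iP \<Theta> e \<and>
              (\<forall>xs. length xs = i \<longrightarrow> \<Theta> xs - Poly_Mapping.single xs 1 \<in> tens_rel S i)))"

definition is_ring_hom :: "('a::ring \<Rightarrow> 'c::ring) \<Rightarrow> bool" where
  "is_ring_hom h \<longleftrightarrow> (\<forall>x y. h (x + y) = h x + h y \<and> h (x * y) = h x * h y)"

definition covrep :: "('r::ring_1, 'p::ab_group_add, 'q::ab_group_add) rsys \<Rightarrow>
    ('p \<Rightarrow> 'c::ring) \<Rightarrow> ('q \<Rightarrow> 'c) \<Rightarrow> ('r \<Rightarrow> 'c) \<Rightarrow> bool" where
  "covrep S Sm Tm \<sigma> \<longleftrightarrow>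
     (\<forall>x y. Sm (x + y) = Sm x + Sm y) \<and> (\<forall>x y. Tm (x + y) = Tm x + Tm y) \<and>
     is_ring_hom \<sigma> \<and>
     (\<forall>p r. Sm (rP S p r) = Sm p * \<sigma> r) \<and> (\<forall>r p. Sm (lP S r p) = \<sigma> r * Sm p) \<and>
     (\<forall>q r. Tm (rQ S q r) = Tm q * \<sigma> r) \<and> (\<forall>r q. Tm (lQ S r q) = \<sigma> r * Tm q) \<and>
     (\<forall>p q. \<sigma> (psi S p q) = Sm p * Tm q)"

text \<open>(iP, iQ, iR, 'b) is the Toeplitz representation: a covariant representation
that is universal among covariant representations into rings of type 'c.\<close>
definition toeplitz_rep :: "('r::ring_1, 'p::ab_group_add, 'q::ab_group_add) rsys \<Rightarrow>
    ('p \<Rightarrow> 'b::ring) \<Rightarrow> ('q \<Rightarrow> 'b) \<Rightarrow> ('r \<Rightarrow> 'b) \<Rightarrow> 'c::ring itself \<Rightarrow> bool" where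
  "toeplitz_rep S iP iQ iR _ \<longleftrightarrow> covrep S iP iQ iR \<and>
     (\<forall>(Sm::'p \<Rightarrow> 'c) Tm \<sigma>. covrep S Sm Tm \<sigma> \<longrightarrow>
        (\<exists>!h. is_ring_hom h \<and> (\<forall>p. h (iP p) = Sm p) \<and> (\<forall>q. h (iQ q) = Tm q) \<and>
              (\<forall>r. h (iR r) = \<sigma> r)))"

inductive_set add_span :: "'a::ab_group_add set \<Rightarrow> 'a set" for A where
  zero: "0 \<in> add_span A"
| gen: "a \<in> A \<Longrightarrow> a \<in> add_span A"
| add: "x \<in> add_span A \<Longrightarrow> y \<in> add_span A \<Longrightarrow> x + y \<in> add_span A"
| neg: "x \<in> add_span A \<Longrightarrow> - x \<in> add_span A"

definition set_prod :: "'a::ring set \<Rightarrow> 'a set \<Rightarrow> 'a set" where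
  "set_prod X Y = add_span {x * y | x y. x \<in> X \<and> y \<in> Y}"

definition Qimg :: "('r \<Rightarrow> 'b::ring) \<Rightarrow> ('q \<Rightarrow> 'b) \<Rightarrow> nat \<Rightarrow> 'b set" where
  "Qimg iR iQ m = (if m = 0 then range iR else {lprod (map iQ qs) | qs. length qs = m})"

definition Pimg :: "('r \<Rightarrow> 'b::ring) \<Rightarrow> ('p \<Rightarrow> 'b) \<Rightarrow> nat \<Rightarrow> 'b set" where
  "Pimg iR iP n = (if n = 0 then range iR else {lprod (map iP ps) | ps. length ps = n})"

definition Tdeg :: "('r \<Rightarrow> 'b::ring) \<Rightarrow> ('q \<Rightarrow> 'b) \<Rightarrow> ('p \<Rightarrow> 'b) \<Rightarrow> int \<Rightarrow> 'b set" where
  "Tdeg iR iQ iP i = add_span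
     ({a * b | a b m n. a \<in> Qimg iR iQ m \<and> b \<in> Pimg iR iP n \<and> int m - int n = i} \<union>
      {iR r * a * b | r a b m n. a \<in> Qimg iR iQ m \<and> b \<in> Pimg iR iP n \<and> int m - int n = i})"

end

theory Submission imports Defs begin

lemma lprod_append: "xs \<noteq> [] \<Longrightarrow> ys \<noteq> [] \<Longrightarrow> lprod (xs @ ys) = lprod xs * lprod ys"
proof (induction xs rule: lprod.induct)
  case (3 x y zs) then show ?case by (simp add: mult.assoc)
qed (auto simp: neq_Nil_conv)

lemma lprod_Cons: "ys \<noteq> [] \<Longrightarrow> lprod (x # ys) = x * lprod ys"
  by (cases ys) auto

lemma lprod_snoc: "ys \<noteq> [] \<Longrightarrow> lprod (ys @ [x]) = lprod ys * x"
  using lprod_append[of ys "[x]"] by simp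

lemma add_span_mono_sub: "x \<in> add_span A \<Longrightarrow> A \<subseteq> add_span C \<Longrightarrow> x \<in> add_span C"
  by (induction x rule: add_span.induct) (auto intro: add_span.intros)

lemma add_span_left_id:
  fixes e :: "'a::ring"
  assumes "\<And>g. g \<in> A \<Longrightarrow> e * g = g" "x \<in> add_span A" shows "e * x = x"
  using assms(2) by (induction x rule: add_span.induct) (auto simp: assms(1) distrib_left)

lemma add_span_right_id:
  fixes e :: "'a::ring"
  assumes "\<And>g. g \<in> A \<Longrightarrow> g * e = g" "x \<in> add_span A" shows "x * e = x"
  using assms(2) by (induction x rule: add_span.induct) (auto simp: assms(1) distrib_right)

lemma add_span_mult:
  fixes x y :: "'a::ring"
  assumes "x \<in> add_span A" "y \<in> add_span B" "\<And>a b. a \<in> A \<Longrightarrow> b \<in> B \<Longrightarrow> a * b \<in> add_span C"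
  shows "x * y \<in> add_span C"
  using assms(1)
proof (induction x rule: add_span.induct)
  case zero then show ?case by (simp add: add_span.zero)
next
  case (gen a)
  show ?case using assms(2)
    by (induction y rule: add_span.induct)
       (auto simp: gen assms(3) distrib_left intro: add_span.intros)
next
  case (add x y) then show ?case by (auto simp: distrib_right intro: add_span.intros)
next
  case (neg x) then show ?case by (auto intro: add_span.intros)
qed

section \<open>integer multiples\<close>

fun nsm :: "nat \<Rightarrow> 'a::ab_group_add \<Rightarrow> 'a" where
  "nsm 0 x = 0" | "nsm (Suc n) x = x + nsm n x"

definition zsm :: "int \<Rightarrow> 'a::ab_group_add \<Rightarrow> 'a" where
  "zsm k x = (if 0 \<le> k then nsm (nat k) x else - nsm (nat (-k)) x)"

lemma zsm_succ: "zsm (k+1) x = x + zsm k x"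
proof (cases "0 \<le> k")
  case True
  then have "nat (k+1) = Suc (nat k)" by simp
  then show ?thesis using True by (simp add: zsm_def)
next
  case False
  show ?thesis
  proof (cases "k = -1")
    case True then show ?thesis by (simp add: zsm_def)
  next
    case False
    with \<open>\<not> 0 \<le> k\<close> have "nat (-k) = Suc (nat (-(k+1)))" by simp
    then show ?thesis using \<open>\<not> 0 \<le> k\<close> False by (simp add: zsm_def)
  qed
qed

lemma zsm_pred: "zsm (k-1) x = zsm k x - x"
  using zsm_succ[of "k-1" x] by (simp add: algebra_simps)

lemma zsm_add: "zsm (a+b) x = zsm a x + zsm b x"
proof (induction b rule: int_induct[where k=0])
  case base then show ?case by (simp add: zsm_def)
next
  case (step1 i) then show ?case using zsm_succ[of "a+i" x] zsm_succ[of i x]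
    by (simp add: algebra_simps)
next
  case (step2 i)
  have "zsm (a+(i-1)) x = zsm (a+i) x - x" using zsm_pred[of "a+i" x] by (simp add: algebra_simps)
  moreover have "zsm (i-1) x = zsm i x - x" by (rule zsm_pred)
  ultimately show ?case using step2
    by (metis (no_types, lifting) add.commute add_diff_eq diff_add_cancel)
qed

lemma zsm_0[simp]: "zsm 0 x = 0" by (simp add: zsm_def)
lemma zsm_1[simp]: "zsm 1 x = x" by (simp add: zsm_def)
lemma zsm_uminus: "zsm (-a) x = - zsm a x"
proof -
  have h: "zsm a x + zsm (-a) x = 0" using zsm_add[of a "-a" x] by simp
  show ?thesis using minus_unique[OF h] by simp
qed

definition Lext :: "('c \<Rightarrow> 'a::ab_group_add) \<Rightarrow> ('c \<Rightarrow>\<^sub>0 int) \<Rightarrow> 'a" where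
  "Lext f g = (\<Sum>i\<in>Poly_Mapping.keys g. zsm (Poly_Mapping.lookup g i) (f i))"

lemma Lext_0[simp]: "Lext f 0 = 0" by (simp add: Lext_def)
lemma Lext_single[simp]: "Lext f (Poly_Mapping.single a 1) = f a" by (simp add: Lext_def)
lemma Lext_minus: "Lext f (- g) = - Lext f g"
  by (simp add: Lext_def zsm_uminus sum_negf)

lemma Lext_add: "Lext f (a+b) = Lext f a + Lext f b"
proof -
  have *: "(\<Sum>i\<in>Poly_Mapping.keys a. zsm (Poly_Mapping.lookup a i) (f i)) = (\<Sum>i\<in>Poly_Mapping.keys a \<union> Poly_Mapping.keys b. zsm (Poly_Mapping.lookup a i) (f i))"
          "(\<Sum>i\<in>Poly_Mapping.keys b. zsm (Poly_Mapping.lookup b i) (f i)) = (\<Sum>i\<in>Poly_Mapping.keys a \<union> Poly_Mapping.keys b. zsm (Poly_Mapping.lookup b i) (f i))"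
    by (auto simp: in_keys_iff intro!: sum.mono_neutral_left)
  have "Lext f (a+b) = (\<Sum>i\<in>Poly_Mapping.keys (a + b). zsm (Poly_Mapping.lookup a i) (f i) + zsm (Poly_Mapping.lookup b i) (f i))"
    by (auto simp: Lext_def lookup_add zsm_add)
  also have "\<dots> = (\<Sum>i \<in> Poly_Mapping.keys a \<union> Poly_Mapping.keys b. zsm (Poly_Mapping.lookup a i) (f i) + zsm (Poly_Mapping.lookup b i) (f i))"
  proof (rule sum.mono_neutral_cong_left)
    show "\<forall>i\<in>Poly_Mapping.keys a \<union> Poly_Mapping.keys b - Poly_Mapping.keys (a + b). zsm (Poly_Mapping.lookup a i) (f i) + zsm (Poly_Mapping.lookup b i) (f i) = 0"
      by (metis DiffD2 zsm_add zsm_0 in_keys_iff lookup_add)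
  qed (auto simp: keys_add)
  also have "\<dots> = Lext f a + Lext f b"
    by (auto simp: * sum.distrib Lext_def)
  finally show ?thesis .
qed

lemma Lext_diff: "Lext f (a - b) = Lext f a - Lext f b"
  by (metis Lext_add Lext_minus diff_conv_add_uminus)

lemma lprod_split3:
  "lprod (us @ x # vs) = (if us = [] then (if vs = [] then x else x * lprod vs)
      else (if vs = [] then lprod us * x else lprod us * x * lprod vs))"
  by (cases "us = []"; cases "vs = []")
     (auto simp: lprod_append lprod_Cons lprod_snoc mult.assoc)

lemma lprod_mid_add:
  fixes x y :: "'a::ring"
  shows "lprod (us @ (x+y) # vs) = lprod (us @ x # vs) + lprod (us @ y # vs)"
  by (simp add: lprod_split3 distrib_left distrib_right)

lemma lprod_mid2:
  fixes x y :: "'a::ring"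
  assumes "x1 * x2 = y1 * y2"
  shows "lprod (us @ x1 # x2 # vs) = lprod (us @ y1 # y2 # vs)"
proof -
  have "lprod (x1 # x2 # vs) = lprod (y1 # y2 # vs)"
    using assms by (cases "vs = []") (auto simp: lprod_Cons mult.assoc[symmetric])
  then show ?thesis
    by (cases "us = []") (auto simp: lprod_append[of us "_ # _ # vs", simplified])
qed

locale tsys =
  fixes S :: "('r::ring_1, 'p::ab_group_add, 'q::ab_group_add) rsys"
    and iP :: "'p \<Rightarrow> 'b::ring" and iQ :: "'q \<Rightarrow> 'b" and iR :: "'r \<Rightarrow> 'b"
  assumes us: "unital_rsystem S" and cov: "covrep S iP iQ iR"
begin

lemma iP_add[simp]: "iP (x + y) = iP x + iP y" using cov by (simp add: covrep_def)
lemma iQ_add[simp]: "iQ (x + y) = iQ x + iQ y" using cov by (simp add: covrep_def)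
lemma iR_add[simp]: "iR (x + y) = iR x + iR y" using cov by (simp add: covrep_def is_ring_hom_def)
lemma iR_mult[simp]: "iR (x * y) = iR x * iR y" using cov by (simp add: covrep_def is_ring_hom_def)
lemma iP_rP[simp]: "iP (rP S p r) = iP p * iR r" using cov by (simp add: covrep_def)
lemma iP_lP[simp]: "iP (lP S r p) = iR r * iP p" using cov by (simp add: covrep_def)
lemma iQ_rQ[simp]: "iQ (rQ S q r) = iQ q * iR r" using cov by (simp add: covrep_def)
lemma iQ_lQ[simp]: "iQ (lQ S r q) = iR r * iQ q" using cov by (simp add: covrep_def)
lemma iR_psi[simp]: "iR (psi S p q) = iP p * iQ q" using cov by (simp add: covrep_def)

lemma iP_0[simp]: "iP 0 = 0" using iP_add[of 0 0] by simp
lemma iQ_0[simp]: "iQ 0 = 0" using iQ_add[of 0 0] by simp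
lemma iP_neg[simp]: "iP (- x) = - iP x" using minus_unique[of "iP x" "iP (-x)"] iP_add[of x "-x"] by simp
lemma iQ_neg[simp]: "iQ (- x) = - iQ x" using minus_unique[of "iQ x" "iQ (-x)"] iQ_add[of x "-x"] by simp

lemma lQ_one[simp]: "lQ S 1 q = q" and rQ_one[simp]: "rQ S q 1 = q"
  and lP_one[simp]: "lP S 1 p = p" and rP_one[simp]: "rP S p 1 = p"
  using us by (auto simp: unital_rsystem_def unital_bimodule_def)

lemma psi_bal: "psi S (rP S p r) q = psi S p (lQ S r q)"
  using us by (simp add: unital_rsystem_def psi_bimod_hom_def)

lemma iR1_Q[simp]: "iR 1 * iQ q = iQ q" using iQ_lQ[of 1 q] by simp
lemma iR1_P[simp]: "iP p * iR 1 = iP p" using iP_rP[of p 1] by simp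

abbreviation Tl where "Tl qs \<equiv> lprod (map iQ qs)"
abbreviation Sl where "Sl ps \<equiv> lprod (map iP ps)"

lemma SlTl_psi:
  "length ps = length xs \<Longrightarrow> ps \<noteq> [] \<Longrightarrow> Sl ps * Tl xs = iR (psi_list S ps xs)"
proof (induction ps arbitrary: xs)
  case Nil then show ?case by simp
next
  case (Cons p ps')
  show ?case
  proof (cases "ps' = []")
    case True
    with Cons.prems obtain x where "xs = [x]" by (cases xs) auto
    with True show ?thesis by simp
  next
    case False
    have xs: "xs = butlast xs @ [last xs]" using Cons.prems by (metis append_butlast_last_id list.size(3) nat.distinct(1) length_Cons)
    have ne: "butlast xs \<noteq> []" using Cons.prems False by (cases ps') (auto simp: length_0_conv[symmetric] simp del: length_0_conv)
    have IH: "Sl ps' * Tl (butlast xs) = iR (psi_list S ps' (butlast xs))"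
      using Cons.IH[of "butlast xs"] Cons.prems False by simp
    have "Sl (p # ps') * Tl xs = iP p * (Sl ps' * Tl (butlast xs)) * iQ (last xs)"
      using False ne by (subst xs) (simp add: lprod_Cons lprod_snoc mult.assoc)
    also have "\<dots> = iR (psi_list S (p # ps') xs)"
      using False by (simp add: IH)
    finally show ?thesis .
  qed
qed

lemma Tl_rQ: "qs \<noteq> [] \<Longrightarrow> Tl (rQ_list S qs r) = Tl qs * iR r"
proof -
  assume ne: "qs \<noteq> []"
  have q: "qs = butlast qs @ [last qs]" using ne by simp
  show ?thesis
  proof (cases "butlast qs = []")
    case True then show ?thesis using q by (simp add: rQ_list_def) (metis lprod.simps(2) list.simps(8) list.simps(9) append.left_neutral)
  next
    case False
    then show ?thesis unfolding rQ_list_def by (subst (2) q) (simp add: lprod_snoc mult.assoc)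
  qed
qed

lemma Tl_lQ: "qs \<noteq> [] \<Longrightarrow> iR r * Tl qs = Tl (lQ S r (hd qs) # tl qs)"
  by (cases qs; cases "tl qs") (auto simp: lprod_Cons mult.assoc)

lemma Sl_lP: "ps \<noteq> [] \<Longrightarrow> iR r * Sl ps = Sl (lP S r (hd ps) # tl ps)"
  by (cases ps; cases "tl ps") (auto simp: lprod_Cons mult.assoc)

lemma Sl_rP: "ps \<noteq> [] \<Longrightarrow> Sl ps * iR r = Sl (butlast ps @ [rP S (last ps) r])"
proof -
  assume ne: "ps \<noteq> []"
  have q: "ps = butlast ps @ [last ps]" using ne by simp
  show ?thesis
  proof (cases "butlast ps = []")
    case True then show ?thesis using q by simp (metis lprod.simps(2) list.simps(8) list.simps(9) append.left_neutral)
  next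
    case False
    then show ?thesis by (subst (1) q) (simp add: lprod_snoc mult.assoc)
  qed
qed

lemma QQ: "a \<in> Qimg iR iQ m \<Longrightarrow> c \<in> Qimg iR iQ k \<Longrightarrow> a * c \<in> Qimg iR iQ (m + k)"
proof -
  assume a: "a \<in> Qimg iR iQ m" and c: "c \<in> Qimg iR iQ k"
  show ?thesis
  proof (cases "m = 0")
    case True
    then obtain r where r: "a = iR r" using a by (auto simp: Qimg_def)
    show ?thesis
    proof (cases "k = 0")
      case True
      then obtain s where "c = iR s" using c by (auto simp: Qimg_def)
      then have "a * c = iR (r * s)" using r by simp
      then show ?thesis using True \<open>m = 0\<close> by (simp add: Qimg_def del: iR_mult)
    next
      case False
      then obtain qs where qs: "c = Tl qs" "length qs = k" using c by (auto simp: Qimg_def)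
      then have "qs \<noteq> []" using False by auto
      then show ?thesis using qs r False \<open>m = 0\<close>
        by (auto simp: Qimg_def Tl_lQ intro!: exI[of _ "lQ S r (hd qs) # tl qs"])
    qed
  next
    case False
    then obtain qs where qs: "a = Tl qs" "length qs = m" using a by (auto simp: Qimg_def)
    then have ne: "qs \<noteq> []" using False by auto
    show ?thesis
    proof (cases "k = 0")
      case True
      then obtain s where "c = iR s" using c by (auto simp: Qimg_def)
      then show ?thesis using qs ne True False
        by (auto simp: Qimg_def Tl_rQ[symmetric] rQ_list_def intro!: exI[of _ "rQ_list S qs s"])
    next
      case False
      then obtain qs' where qs': "c = Tl qs'" "length qs' = k" using c by (auto simp: Qimg_def)
      then have "qs' \<noteq> []" using False by auto
      then show ?thesis using qs qs' ne False
        by (auto simp: Qimg_def lprod_append[symmetric] intro!: exI[of _ "qs @ qs'"])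
    qed
  qed
qed

lemma PP: "a \<in> Pimg iR iP m \<Longrightarrow> c \<in> Pimg iR iP k \<Longrightarrow> a * c \<in> Pimg iR iP (m + k)"
proof -
  assume a: "a \<in> Pimg iR iP m" and c: "c \<in> Pimg iR iP k"
  show ?thesis
  proof (cases "m = 0")
    case True
    then obtain r where r: "a = iR r" using a by (auto simp: Pimg_def)
    show ?thesis
    proof (cases "k = 0")
      case True
      then obtain s where "c = iR s" using c by (auto simp: Pimg_def)
      then have "a * c = iR (r * s)" using r by simp
      then show ?thesis using True \<open>m = 0\<close> by (simp add: Pimg_def del: iR_mult)
    next
      case False
      then obtain qs where qs: "c = Sl qs" "length qs = k" using c by (auto simp: Pimg_def)
      then have "qs \<noteq> []" using False by auto
      then show ?thesis using qs r False \<open>m = 0\<close>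
        by (auto simp: Pimg_def Sl_lP intro!: exI[of _ "lP S r (hd qs) # tl qs"])
    qed
  next
    case False
    then obtain qs where qs: "a = Sl qs" "length qs = m" using a by (auto simp: Pimg_def)
    then have ne: "qs \<noteq> []" using False by auto
    show ?thesis
    proof (cases "k = 0")
      case True
      then obtain s where "c = iR s" using c by (auto simp: Pimg_def)
      then show ?thesis using qs ne True False
        by (auto simp: Pimg_def Sl_rP intro!: exI[of _ "butlast qs @ [rP S (last qs) s]"])
    next
      case False
      then obtain qs' where qs': "c = Sl qs'" "length qs' = k" using c by (auto simp: Pimg_def)
      then have "qs' \<noteq> []" using False by auto
      then show ?thesis using qs qs' ne False
        by (auto simp: Pimg_def lprod_append[symmetric] intro!: exI[of _ "qs @ qs'"])
    qed
  qed
qed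

lemma Qimg0: "Qimg iR iQ 0 = range iR" by (simp add: Qimg_def)
lemma Pimg0: "Pimg iR iP 0 = range iR" by (simp add: Pimg_def)

lemma PQ: "b \<in> Pimg iR iP n \<Longrightarrow> c \<in> Qimg iR iQ m \<Longrightarrow>
   (n \<le> m \<and> b * c \<in> Qimg iR iQ (m - n)) \<or> (m \<le> n \<and> b * c \<in> Pimg iR iP (n - m))"
proof -
  assume b: "b \<in> Pimg iR iP n" and c: "c \<in> Qimg iR iQ m"
  show ?thesis
  proof (cases "n = 0")
    case True
    then have "b \<in> Qimg iR iQ 0" using b by (simp add: Qimg0 Pimg0)
    then show ?thesis using QQ[OF _ c] True by fastforce
  next
    case n0: False
    show ?thesis
    proof (cases "m = 0")
      case True
      then have "c \<in> Pimg iR iP 0" using c by (simp add: Qimg0 Pimg0)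
      then show ?thesis using PP[OF b] True by fastforce
    next
      case m0: False
      obtain ps where ps: "b = Sl ps" "length ps = n" using b n0 by (auto simp: Pimg_def)
      obtain qs where qs: "c = Tl qs" "length qs = m" using c m0 by (auto simp: Qimg_def)
      consider "n = m" | "n < m" | "m < n" by linarith
      then show ?thesis
      proof cases
        case 1
        then have "b * c = iR (psi_list S ps qs)" using ps qs n0 by (auto simp: SlTl_psi)
        then show ?thesis using 1 by (simp add: Qimg0)
      next
        case 2
        have "Tl qs = Tl (take n qs @ drop n qs)" by simp
        also have "\<dots> = Tl (take n qs) * Tl (drop n qs)"
          using qs 2 n0 by (simp only: map_append, subst lprod_append) auto
        finally have "c = Tl (take n qs) * Tl (drop n qs)" using qs by simp
        then have "b * c = iR (psi_list S ps (take n qs)) * Tl (drop n qs)"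
          using ps qs 2 n0 by (auto simp: SlTl_psi mult.assoc[symmetric])
        moreover have "Tl (drop n qs) \<in> Qimg iR iQ (m - n)" using 2 qs by (auto simp: Qimg_def)
        ultimately have "b * c \<in> Qimg iR iQ (0 + (m - n))" using QQ[of _ 0] by (auto simp: Qimg0)
        then show ?thesis using 2 by simp
      next
        case 3
        have "Sl ps = Sl (take (n-m) ps @ drop (n-m) ps)" by simp
        also have "\<dots> = Sl (take (n-m) ps) * Sl (drop (n-m) ps)"
          using ps 3 m0 by (simp only: map_append, subst lprod_append) auto
        finally have "b = Sl (take (n-m) ps) * Sl (drop (n-m) ps)" using ps by simp
        then have "b * c = Sl (take (n-m) ps) * iR (psi_list S (drop (n-m) ps) qs)"
          using ps qs 3 m0 by (auto simp: SlTl_psi mult.assoc)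
        moreover have "Sl (take (n-m) ps) \<in> Pimg iR iP (n - m)" using 3 ps by (auto simp: Pimg_def)
        ultimately have "b * c \<in> Pimg iR iP ((n - m) + 0)" using PP[of _ _ _ 0] by (auto simp: Pimg0)
        then show ?thesis using 3 by simp
      qed
    qed
  qed
qed

definition Gen :: "int \<Rightarrow> 'b set" where
  "Gen i = {a * b | a b m n. a \<in> Qimg iR iQ m \<and> b \<in> Pimg iR iP n \<and> int m - int n = i}"

lemma Tdeg_eq: "Tdeg iR iQ iP i = add_span (Gen i)"
proof -
  let ?A = "{a * b | a b m n. a \<in> Qimg iR iQ m \<and> b \<in> Pimg iR iP n \<and> int m - int n = i}"
  let ?B = "{iR r * a * b | r a b m n. a \<in> Qimg iR iQ m \<and> b \<in> Pimg iR iP n \<and> int m - int n = i}"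
  have B: "?B \<subseteq> ?A"
  proof
    fix x assume "x \<in> ?B"
    then obtain r a b m n where x: "x = iR r * a * b" "a \<in> Qimg iR iQ m" "b \<in> Pimg iR iP n" "int m - int n = i"
      by blast
    have "iR r * a \<in> Qimg iR iQ (0 + m)" using QQ[of "iR r" 0 a m] x(2) by (simp add: Qimg0)
    then show "x \<in> ?A" using x by auto
  qed
  have "Tdeg iR iQ iP i = add_span (?A \<union> ?B)" by (simp add: Tdeg_def)
  also have "\<dots> = add_span ?A"
  proof
    show "add_span (?A \<union> ?B) \<subseteq> add_span ?A"
    proof
      fix x assume "x \<in> add_span (?A \<union> ?B)"
      then show "x \<in> add_span ?A"
        by (rule add_span_mono_sub) (use B in \<open>blast intro: add_span.gen\<close>)
    qed
    show "add_span ?A \<subseteq> add_span (?A \<union> ?B)"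
    proof
      fix x assume "x \<in> add_span ?A"
      then show "x \<in> add_span (?A \<union> ?B)"
        by (rule add_span_mono_sub) (blast intro: add_span.gen)
    qed
  qed
  finally show ?thesis by (simp add: Gen_def)
qed

lemma Gen_mult: "x \<in> Gen i \<Longrightarrow> y \<in> Gen j \<Longrightarrow> x * y \<in> Gen (i + j)"
proof -
  assume "x \<in> Gen i" "y \<in> Gen j"
  then obtain a b m n c d m' n' where x: "x = a * b" "a \<in> Qimg iR iQ m" "b \<in> Pimg iR iP n" "int m - int n = i"
    and y: "y = c * d" "c \<in> Qimg iR iQ m'" "d \<in> Pimg iR iP n'" "int m' - int n' = j"
    unfolding Gen_def by blast
  have xy: "x * y = a * (b * c) * d" using x y by (simp add: mult.assoc)
  from PQ[OF x(3) y(2)] show ?thesis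
  proof
    assume h: "n \<le> m' \<and> b * c \<in> Qimg iR iQ (m' - n)"
    then have "a * (b * c) \<in> Qimg iR iQ (m + (m' - n))" using QQ x(2) by blast
    moreover have "int (m + (m' - n)) - int n' = i + j" using h x(4) y(4) by auto
    ultimately show ?thesis using xy y(3) unfolding Gen_def by blast
  next
    assume h: "m' \<le> n \<and> b * c \<in> Pimg iR iP (n - m')"
    then have "(b * c) * d \<in> Pimg iR iP ((n - m') + n')" using PP y(3) by blast
    moreover have "int m - int (n - m' + n') = i + j" using h x(4) y(4) by auto
    moreover have "x * y = a * ((b * c) * d)" using xy by (simp add: mult.assoc)
    ultimately show ?thesis using x(2) unfolding Gen_def by blast
  qed
qed

lemma Tdeg_mult: "x \<in> Tdeg iR iQ iP i \<Longrightarrow> y \<in> Tdeg iR iQ iP j \<Longrightarrow> x * y \<in> Tdeg iR iQ iP (i + j)"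
  unfolding Tdeg_eq
proof -
  assume "x \<in> add_span (Gen i)" "y \<in> add_span (Gen j)"
  then show "x * y \<in> add_span (Gen (i + j))"
    by (rule add_span_mult) (rule add_span.gen, rule Gen_mult)
qed

section \<open>Q-side: evaluation of F_{P^n}(Q^n)\<close>

lemma Lext_rel: "g \<in> tens_rel S n \<Longrightarrow> Lext Tl g = 0"
proof (induction g rule: tens_rel.induct)
  case (additive us a vs b)
  have "Tl (us @ (a + b) # vs) = Tl (us @ a # vs) + Tl (us @ b # vs)"
    by (simp add: lprod_mid_add)
  then show ?case by (simp add: Lext_diff)
next
  case (balanced us a b vs r)
  have "iQ (rQ S a r) * iQ b = iQ a * iQ (lQ S r b)" by (simp add: mult.assoc)
  then have "Tl (us @ rQ S a r # b # vs) = Tl (us @ a # lQ S r b # vs)"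
    using lprod_mid2[of "iQ (rQ S a r)" "iQ b" "iQ a" "iQ (lQ S r b)" "map iQ us" "map iQ vs"] by simp
  then show ?case by (simp add: Lext_diff)
next
  case zero then show ?case by simp
next
  case (add x y) then show ?case by (simp add: Lext_add)
next
  case (neg x) then show ?case by (simp add: Lext_minus)
qed

lemma Fpi_eval:
  "Fpi S n iQ iP \<Theta> e \<Longrightarrow> length xs = n \<Longrightarrow> 0 < n \<Longrightarrow> e * Tl xs = Lext Tl (\<Theta> xs)"
proof (induction rule: Fpi.induct)
  case zero then show ?case by simp
next
  case (gen qs ps)
  then have ne: "qs \<noteq> []" "ps \<noteq> []" by auto
  have "Tl qs * Sl ps * Tl xs = Tl qs * iR (psi_list S ps xs)"
    using gen ne by (simp add: mult.assoc SlTl_psi)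
  also have "\<dots> = Tl (rQ_list S qs (psi_list S ps xs))" using ne by (simp add: Tl_rQ)
  finally show ?case by simp
next
  case (add f a g b) then show ?case by (simp add: Lext_add distrib_right)
next
  case (neg f a) then show ?case by (simp add: Lext_minus)
qed

definition Fsum :: "nat \<Rightarrow> 'b set" where
  "Fsum n = {Tl qs * Sl ps | qs ps. length qs = n \<and> length ps = n}"

lemma Fpi_span: "Fpi S n iQ iP \<Theta> e \<Longrightarrow> e \<in> add_span (Fsum n)"
  by (induction rule: Fpi.induct) (auto simp: Fsum_def intro: add_span.intros)

lemma eps_Q:
  assumes "Fpi S n iQ iP \<Theta> e" "\<forall>xs. length xs = n \<longrightarrow> \<Theta> xs - Poly_Mapping.single xs 1 \<in> tens_rel S n"
    "0 < n" "length xs = n"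
  shows "e * Tl xs = Tl xs"
proof -
  have "e * Tl xs = Lext Tl (\<Theta> xs)" using Fpi_eval assms by blast
  also have "\<Theta> xs = (\<Theta> xs - Poly_Mapping.single xs 1) + Poly_Mapping.single xs 1" by simp
  also have "Lext Tl \<dots> = Tl xs"
  proof -
    have "\<Theta> xs - Poly_Mapping.single xs 1 \<in> tens_rel S n" using assms(2,4) by blast
    then have "Lext Tl (\<Theta> xs - Poly_Mapping.single xs 1) = 0" by (rule Lext_rel)
    then show ?thesis by (simp only: Lext_add Lext_single) simp
  qed
  finally show ?thesis .
qed

section \<open>Q-side: existence\<close>

lemma rel_diff: "x \<in> tens_rel S n \<Longrightarrow> y \<in> tens_rel S n \<Longrightarrow> x - y \<in> tens_rel S n"
  by (metis diff_conv_add_uminus tens_rel.add tens_rel.neg)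

lemma rel_zero_elem: "length (us @ a # vs) = n \<Longrightarrow> Poly_Mapping.single (us @ 0 # vs) 1 \<in> tens_rel S n"
proof -
  assume "length (us @ a # vs) = n"
  then have l': "length (us @ 0 # vs) = n" by simp
  show ?thesis using tens_rel.neg[OF tens_rel.additive[OF l', where b=0]] by simp
qed

lemma rel_neg_elem: "length (us @ a # vs) = n \<Longrightarrow>
   Poly_Mapping.single (us @ (- a) # vs) 1 + Poly_Mapping.single (us @ a # vs) 1 \<in> tens_rel S n"
proof -
  assume l: "length (us @ a # vs) = n"
  have "Poly_Mapping.single (us @ 0 # vs) 1 - (Poly_Mapping.single (us @ (-a + a) # vs) 1 - Poly_Mapping.single (us @ (-a) # vs) 1
      - Poly_Mapping.single (us @ a # vs) 1) \<in> tens_rel S n"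
    by (rule rel_diff[OF rel_zero_elem[OF l]]) (rule tens_rel.additive, use l in simp)
  then have "Poly_Mapping.single (us @ a # vs) 1 + Poly_Mapping.single (us @ (- a) # vs) 1 \<in> tens_rel S n" by simp
  then show ?thesis by (simp add: add.commute)
qed

lemma step_inner:
  assumes "f \<in> FPQ S" "length qs = n" "length ps = n"
  shows "\<exists>\<Theta>' e'. Fpi S (Suc n) iQ iP \<Theta>' e' \<and>
     (\<forall>xs x. length xs = n \<longrightarrow>
        \<Theta>' (xs @ [x]) - Poly_Mapping.single (qs @ [f (lQ S (psi_list S ps xs) x)]) 1 \<in> tens_rel S (Suc n))"
  using assms(1)
proof (induction rule: FPQ.induct)
  case zero
  show ?case
  proof (intro exI conjI allI impI)
    show "Fpi S (Suc n) iQ iP (\<lambda>xs. 0) 0" by (rule Fpi.zero)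
    fix xs :: "'q list" and x
    show "0 - Poly_Mapping.single (qs @ [0]) 1 \<in> tens_rel S (Suc n)"
      using tens_rel.neg[OF rel_zero_elem[of qs x "[]"]] assms by simp
  qed
next
  case (gen q p)
  let ?T = "\<lambda>xs. Poly_Mapping.single (rQ_list S (qs @ [q]) (psi_list S (p # ps) xs)) (1::int)"
  show ?case
  proof (intro exI conjI allI impI)
    show "Fpi S (Suc n) iQ iP ?T (lprod (map iQ (qs @ [q])) * lprod (map iP (p # ps)))"
      by (rule Fpi.gen) (use assms in auto)
    fix xs :: "'q list" and x assume l: "length xs = n"
    have "psi_list S (p # ps) (xs @ [x]) = psi S p (lQ S (psi_list S ps xs) x)"
    proof (cases "ps = []")
      case True then show ?thesis using l assms by simp
    next
      case False then show ?thesis by (simp add: psi_bal)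
    qed
    then show "?T (xs @ [x]) - Poly_Mapping.single (qs @ [rQ S q (psi S p (lQ S (psi_list S ps xs) x))]) 1
        \<in> tens_rel S (Suc n)"
      by (simp add: rQ_list_def tens_rel.zero)
  qed
next
  case (add f g)
  then obtain \<Theta>1 e1 \<Theta>2 e2 where
    1: "Fpi S (Suc n) iQ iP \<Theta>1 e1" "\<forall>xs x. length xs = n \<longrightarrow>
        \<Theta>1 (xs @ [x]) - Poly_Mapping.single (qs @ [f (lQ S (psi_list S ps xs) x)]) 1 \<in> tens_rel S (Suc n)"
    and 2: "Fpi S (Suc n) iQ iP \<Theta>2 e2" "\<forall>xs x. length xs = n \<longrightarrow>
        \<Theta>2 (xs @ [x]) - Poly_Mapping.single (qs @ [g (lQ S (psi_list S ps xs) x)]) 1 \<in> tens_rel S (Suc n)"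
    by blast
  show ?case
  proof (intro exI conjI allI impI)
    show "Fpi S (Suc n) iQ iP (\<lambda>xs. \<Theta>1 xs + \<Theta>2 xs) (e1 + e2)" by (rule Fpi.add[OF 1(1) 2(1)])
    fix xs :: "'q list" and x assume l: "length xs = n"
    define y where "y = lQ S (psi_list S ps xs) x"
    have a: "\<Theta>1 (xs @ [x]) - Poly_Mapping.single (qs @ [f y]) 1 \<in> tens_rel S (Suc n)"
      using 1(2) l y_def by blast
    have b: "\<Theta>2 (xs @ [x]) - Poly_Mapping.single (qs @ [g y]) 1 \<in> tens_rel S (Suc n)"
      using 2(2) l y_def by blast
    have c: "Poly_Mapping.single (qs @ [f y + g y]) 1 - Poly_Mapping.single (qs @ [f y]) 1
       - Poly_Mapping.single (qs @ [g y]) 1 \<in> tens_rel S (Suc n)"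
      by (rule tens_rel.additive) (use assms in simp)
    have "(\<Theta>1 (xs @ [x]) - Poly_Mapping.single (qs @ [f y]) 1) + (\<Theta>2 (xs @ [x]) - Poly_Mapping.single (qs @ [g y]) 1)
       - (Poly_Mapping.single (qs @ [f y + g y]) 1 - Poly_Mapping.single (qs @ [f y]) 1
       - Poly_Mapping.single (qs @ [g y]) 1) \<in> tens_rel S (Suc n)"
      by (rule rel_diff[OF tens_rel.add[OF a b] c])
    then show "\<Theta>1 (xs @ [x]) + \<Theta>2 (xs @ [x]) - Poly_Mapping.single (qs @ [f y + g y]) 1 \<in> tens_rel S (Suc n)"
      by (simp add: algebra_simps)
  qed
next
  case (neg f)
  then obtain \<Theta>1 e1 where
    1: "Fpi S (Suc n) iQ iP \<Theta>1 e1" "\<forall>xs x. length xs = n \<longrightarrow>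
        \<Theta>1 (xs @ [x]) - Poly_Mapping.single (qs @ [f (lQ S (psi_list S ps xs) x)]) 1 \<in> tens_rel S (Suc n)"
    by blast
  show ?case
  proof (intro exI conjI allI impI)
    show "Fpi S (Suc n) iQ iP (\<lambda>xs. - \<Theta>1 xs) (- e1)" by (rule Fpi.neg[OF 1(1)])
    fix xs :: "'q list" and x assume l: "length xs = n"
    define y where "y = lQ S (psi_list S ps xs) x"
    have a: "\<Theta>1 (xs @ [x]) - Poly_Mapping.single (qs @ [f y]) 1 \<in> tens_rel S (Suc n)"
      using 1(2) l y_def by blast
    have c: "Poly_Mapping.single (qs @ [- f y]) 1 + Poly_Mapping.single (qs @ [f y]) 1 \<in> tens_rel S (Suc n)"
      by (rule rel_neg_elem) (use assms in simp)
    have "- (\<Theta>1 (xs @ [x]) - Poly_Mapping.single (qs @ [f y]) 1)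
       - (Poly_Mapping.single (qs @ [- f y]) 1 + Poly_Mapping.single (qs @ [f y]) 1) \<in> tens_rel S (Suc n)"
      by (rule rel_diff[OF tens_rel.neg[OF a] c])
    then show "- \<Theta>1 (xs @ [x]) - Poly_Mapping.single (qs @ [- f y]) 1 \<in> tens_rel S (Suc n)"
      by (simp add: algebra_simps)
  qed
qed

definition appx :: "'q \<Rightarrow> ('q list \<Rightarrow>\<^sub>0 int) \<Rightarrow> ('q list \<Rightarrow>\<^sub>0 int)" where
  "appx x g = frag_extend (\<lambda>ys. frag_of (ys @ [x])) g"

lemma appx_rel: "g \<in> tens_rel S n \<Longrightarrow> appx x g \<in> tens_rel S (Suc n)"
proof (induction g rule: tens_rel.induct)
  case (additive us a vs b)
  have "Poly_Mapping.single (us @ (a + b) # (vs @ [x])) 1 - Poly_Mapping.single (us @ a # (vs @ [x])) 1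
       - Poly_Mapping.single (us @ b # (vs @ [x])) 1 \<in> tens_rel S (Suc n)"
    by (rule tens_rel.additive) (use additive in simp)
  then show ?case by (simp add: appx_def frag_extend_diff)
next
  case (balanced us a b vs r)
  have "Poly_Mapping.single (us @ rQ S a r # b # (vs @ [x])) 1
       - Poly_Mapping.single (us @ a # lQ S r b # (vs @ [x])) 1 \<in> tens_rel S (Suc n)"
    by (rule tens_rel.balanced) (use balanced in simp)
  then show ?case by (simp add: appx_def frag_extend_diff)
next
  case zero then show ?case by (simp add: appx_def tens_rel.zero)
next
  case (add g h) then show ?case by (simp add: appx_def frag_extend_add tens_rel.add)
next
  case (neg g) then show ?case by (simp add: appx_def frag_extend_minus tens_rel.neg)
qed

lemma step_outer:
  assumes "Fpi S n iQ iP \<Theta> e" "0 < n" "f \<in> FPQ S" "\<forall>q. f q = q"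
  shows "\<exists>\<Theta>' e'. Fpi S (Suc n) iQ iP \<Theta>' e' \<and>
     (\<forall>xs x. length xs = n \<longrightarrow> \<Theta>' (xs @ [x]) - appx x (\<Theta> xs) \<in> tens_rel S (Suc n))"
  using assms(1)
proof (induction rule: Fpi.induct)
  case zero
  show ?case
    by (rule exI[of _ "\<lambda>xs. 0"], rule exI[of _ 0]) (simp add: Fpi.zero appx_def tens_rel.zero)
next
  case (gen qs ps)
  obtain \<Theta>' e' where th: "Fpi S (Suc n) iQ iP \<Theta>' e'" "\<forall>xs x. length xs = n \<longrightarrow>
        \<Theta>' (xs @ [x]) - Poly_Mapping.single (qs @ [f (lQ S (psi_list S ps xs) x)]) 1 \<in> tens_rel S (Suc n)"
    using step_inner[OF assms(3) gen] by blast
  show ?case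
  proof (intro exI conjI allI impI)
    show "Fpi S (Suc n) iQ iP \<Theta>' e'" by (rule th(1))
    fix xs :: "'q list" and x assume l: "length xs = n"
    define r where "r = psi_list S ps xs"
    have a: "\<Theta>' (xs @ [x]) - Poly_Mapping.single (qs @ [lQ S r x]) 1 \<in> tens_rel S (Suc n)"
      using th(2) l assms(4) r_def by auto
    have ne: "qs \<noteq> []" using gen assms(2) by auto
    have qs: "qs = butlast qs @ [last qs]" using ne by simp
    have b: "Poly_Mapping.single (butlast qs @ rQ S (last qs) r # x # []) 1
       - Poly_Mapping.single (butlast qs @ last qs # lQ S r x # []) 1 \<in> tens_rel S (Suc n)"
      by (rule tens_rel.balanced) (use gen ne assms(2) in simp)
    have b': "Poly_Mapping.single (rQ_list S qs r @ [x]) 1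
       - Poly_Mapping.single (qs @ [lQ S r x]) 1 \<in> tens_rel S (Suc n)"
      using b by (subst (2) qs) (simp add: rQ_list_def)
    have "(\<Theta>' (xs @ [x]) - Poly_Mapping.single (qs @ [lQ S r x]) 1) -
       (Poly_Mapping.single (rQ_list S qs r @ [x]) 1 - Poly_Mapping.single (qs @ [lQ S r x]) 1) \<in> tens_rel S (Suc n)"
      by (rule rel_diff[OF a b'])
    then show "\<Theta>' (xs @ [x]) - appx x (Poly_Mapping.single (rQ_list S qs (psi_list S ps xs)) 1) \<in> tens_rel S (Suc n)"
      by (simp add: appx_def r_def)
  qed
next
  case (add f1 a g b)
  then obtain \<Theta>1 e1 \<Theta>2 e2 where
    1: "Fpi S (Suc n) iQ iP \<Theta>1 e1" "\<forall>xs x. length xs = n \<longrightarrow> \<Theta>1 (xs @ [x]) - appx x (f1 xs) \<in> tens_rel S (Suc n)"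
    and 2: "Fpi S (Suc n) iQ iP \<Theta>2 e2" "\<forall>xs x. length xs = n \<longrightarrow> \<Theta>2 (xs @ [x]) - appx x (g xs) \<in> tens_rel S (Suc n)"
    by blast
  show ?case
  proof (intro exI conjI allI impI)
    show "Fpi S (Suc n) iQ iP (\<lambda>xs. \<Theta>1 xs + \<Theta>2 xs) (e1 + e2)" by (rule Fpi.add[OF 1(1) 2(1)])
    fix xs :: "'q list" and x assume l: "length xs = n"
    have "(\<Theta>1 (xs @ [x]) - appx x (f1 xs)) + (\<Theta>2 (xs @ [x]) - appx x (g xs)) \<in> tens_rel S (Suc n)"
      using 1(2) 2(2) l by (blast intro: tens_rel.add)
    then show "\<Theta>1 (xs @ [x]) + \<Theta>2 (xs @ [x]) - appx x (f1 xs + g xs) \<in> tens_rel S (Suc n)"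
      by (simp add: appx_def frag_extend_add algebra_simps)
  qed
next
  case (neg f1 a)
  then obtain \<Theta>1 e1 where
    1: "Fpi S (Suc n) iQ iP \<Theta>1 e1" "\<forall>xs x. length xs = n \<longrightarrow> \<Theta>1 (xs @ [x]) - appx x (f1 xs) \<in> tens_rel S (Suc n)"
    by blast
  show ?case
  proof (intro exI conjI allI impI)
    show "Fpi S (Suc n) iQ iP (\<lambda>xs. - \<Theta>1 xs) (- e1)" by (rule Fpi.neg[OF 1(1)])
    fix xs :: "'q list" and x assume l: "length xs = n"
    have "- (\<Theta>1 (xs @ [x]) - appx x (f1 xs)) \<in> tens_rel S (Suc n)"
      using 1(2) l by (blast intro: tens_rel.neg)
    then show "- \<Theta>1 (xs @ [x]) - appx x (- f1 xs) \<in> tens_rel S (Suc n)"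
      by (simp add: appx_def frag_extend_minus algebra_simps)
  qed
qed

lemma Q_exists:
  assumes "f \<in> FPQ S" "\<forall>q. f q = q" "0 < n"
  shows "\<exists>\<Theta> e. Fpi S n iQ iP \<Theta> e \<and>
     (\<forall>xs. length xs = n \<longrightarrow> \<Theta> xs - Poly_Mapping.single xs 1 \<in> tens_rel S n)"
  using assms(3)
proof (induction n rule: nat_induct_non_zero)
  case 1
  obtain \<Theta>' e' where th: "Fpi S (Suc 0) iQ iP \<Theta>' e'" "\<forall>xs x. length xs = 0 \<longrightarrow>
        \<Theta>' (xs @ [x]) - Poly_Mapping.single ([] @ [f (lQ S (psi_list S [] xs) x)]) 1 \<in> tens_rel S (Suc 0)"
    using step_inner[OF assms(1), of "[]" 0 "[]"] by auto
  show ?case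
  proof (intro exI conjI allI impI)
    show "Fpi S 1 iQ iP \<Theta>' e'" using th(1) by simp
    fix xs :: "'q list" assume "length xs = 1"
    then obtain x where "xs = [x]" by (cases xs) auto
    then show "\<Theta>' xs - Poly_Mapping.single xs 1 \<in> tens_rel S 1" using th(2) assms(2) by auto
  qed
next
  case (Suc n)
  then obtain \<Theta> e where th: "Fpi S n iQ iP \<Theta> e"
      "\<forall>xs. length xs = n \<longrightarrow> \<Theta> xs - Poly_Mapping.single xs 1 \<in> tens_rel S n" by blast
  obtain \<Theta>' e' where th': "Fpi S (Suc n) iQ iP \<Theta>' e'"
     "\<forall>xs x. length xs = n \<longrightarrow> \<Theta>' (xs @ [x]) - appx x (\<Theta> xs) \<in> tens_rel S (Suc n)"
    using step_outer[OF th(1) Suc(1) assms(1,2)] by blast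
  show ?case
  proof (intro exI conjI allI impI)
    show "Fpi S (Suc n) iQ iP \<Theta>' e'" by (rule th'(1))
    fix ys :: "'q list" assume l: "length ys = Suc n"
    then have ne: "ys \<noteq> []" by auto
    define xs where "xs = butlast ys"
    define x where "x = last ys"
    have ys: "ys = xs @ [x]" using ne by (simp add: xs_def x_def)
    have lx: "length xs = n" using l by (simp add: xs_def)
    have "(\<Theta>' (xs @ [x]) - appx x (\<Theta> xs)) + appx x (\<Theta> xs - Poly_Mapping.single xs 1) \<in> tens_rel S (Suc n)"
      using th'(2) lx appx_rel th(2) by (blast intro: tens_rel.add)
    then show "\<Theta>' ys - Poly_Mapping.single ys 1 \<in> tens_rel S (Suc n)"
      by (simp add: ys appx_def frag_extend_diff)
  qed
qed

section \<open>P-side\<close>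

lemma P_base: "f \<in> FQP S \<Longrightarrow> \<exists>E \<in> add_span (Fsum 1). \<forall>y. iP y * E = iP (f y)"
proof (induction rule: FQP.induct)
  case zero then show ?case by (rule bexI[of _ 0]) (auto intro: add_span.zero)
next
  case (gen q p)
  have "iQ q * iP p \<in> Fsum 1" unfolding Fsum_def
    by (rule CollectI, rule exI[of _ "[q]"], rule exI[of _ "[p]"]) simp
  then show ?case by (auto intro!: bexI[of _ "iQ q * iP p"] add_span.gen simp: mult.assoc)
next
  case (add f g)
  then obtain E1 E2 where "E1 \<in> add_span (Fsum 1)" "\<forall>y. iP y * E1 = iP (f y)"
    "E2 \<in> add_span (Fsum 1)" "\<forall>y. iP y * E2 = iP (g y)" by blast
  then show ?case by (auto intro!: bexI[of _ "E1 + E2"] add_span.add simp: distrib_left)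
next
  case (neg f)
  then obtain E1 where "E1 \<in> add_span (Fsum 1)" "\<forall>y. iP y * E1 = iP (f y)" by blast
  then show ?case by (auto intro!: bexI[of _ "- E1"] add_span.neg)
qed

lemma Fsum_wrap: "x \<in> add_span (Fsum n) \<Longrightarrow> 0 < n \<Longrightarrow> iQ q * x * iP p \<in> add_span (Fsum (Suc n))"
proof (induction x rule: add_span.induct)
  case zero then show ?case by (simp add: add_span.zero)
next
  case (gen a)
  then obtain qs ps where a: "a = Tl qs * Sl ps" "length qs = n" "length ps = n" by (auto simp: Fsum_def)
  then have "qs \<noteq> []" "ps \<noteq> []" using gen by auto
  then have "iQ q * a * iP p = Tl (q # qs) * Sl (ps @ [p])"
    using a by (simp add: lprod_Cons lprod_snoc mult.assoc)
  moreover have "length (q # qs) = Suc n" "length (ps @ [p]) = Suc n" using a by auto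
  then have "Tl (q # qs) * Sl (ps @ [p]) \<in> Fsum (Suc n)" unfolding Fsum_def by blast
  ultimately show ?case by (simp add: add_span.gen)
next
  case (add x y) then show ?case by (simp add: distrib_left distrib_right add_span.add)
next
  case (neg x) then show ?case by (simp add: add_span.neg)
qed

lemma P_step:
  assumes En: "En \<in> add_span (Fsum n)" "\<forall>ps. length ps = n \<longrightarrow> Sl ps * En = Sl ps" "0 < n"
    and e1: "e1 \<in> add_span (Fsum 1)"
  shows "\<exists>E' \<in> add_span (Fsum (Suc n)). \<forall>ys y. length ys = n \<longrightarrow> Sl ys * iP y * E' = Sl ys * iP y * e1"
  using e1
proof (induction e1 rule: add_span.induct)
  case zero then show ?case by (rule bexI[of _ 0]) (auto intro: add_span.zero)
next
  case (gen a)
  then obtain q p where a: "a = iQ q * iP p"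
    by (auto simp: Fsum_def length_Suc_conv)
  show ?case
  proof (rule bexI[of _ "iQ q * En * iP p"], intro allI impI)
    show "iQ q * En * iP p \<in> add_span (Fsum (Suc n))" by (rule Fsum_wrap[OF En(1) En(3)])
    fix ys :: "'p list" and y assume l: "length ys = n"
    then have ne: "ys \<noteq> []" using En(3) by auto
    have h: "Sl ys * iR (psi S y q) = Sl (butlast ys @ [rP S (last ys) (psi S y q)])"
      using Sl_rP[OF ne] .
    have l': "length (butlast ys @ [rP S (last ys) (psi S y q)]) = n" using l ne En(3) by simp
    have "Sl ys * iP y * (iQ q * En * iP p) = (Sl ys * iR (psi S y q)) * En * iP p"
      by (simp add: mult.assoc)
    also have "\<dots> = Sl ys * iR (psi S y q) * iP p"
    proof -
      have z: "Sl (butlast ys @ [rP S (last ys) (psi S y q)]) * En = Sl (butlast ys @ [rP S (last ys) (psi S y q)])"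
        using En(2) l' by blast
      show ?thesis by (simp only: h z)
    qed
    also have "\<dots> = Sl ys * iP y * a" by (simp add: a mult.assoc)
    finally show "Sl ys * iP y * (iQ q * En * iP p) = Sl ys * iP y * a" .
  qed
next
  case (add x y)
  then obtain E1 E2 where "E1 \<in> add_span (Fsum (Suc n))" "\<forall>ys y. length ys = n \<longrightarrow> Sl ys * iP y * E1 = Sl ys * iP y * x"
    "E2 \<in> add_span (Fsum (Suc n))" "\<forall>ys y'. length ys = n \<longrightarrow> Sl ys * iP y' * E2 = Sl ys * iP y' * y" by blast
  then show ?case by (auto intro!: bexI[of _ "E1 + E2"] add_span.add simp: distrib_left)
next
  case (neg x)
  then obtain E1 where "E1 \<in> add_span (Fsum (Suc n))" "\<forall>ys y. length ys = n \<longrightarrow> Sl ys * iP y * E1 = Sl ys * iP y * x"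
    by blast
  then show ?case by (auto intro!: bexI[of _ "- E1"] add_span.neg)
qed

lemma P_exists:
  assumes "f \<in> FQP S" "\<forall>p. f p = p" "0 < n"
  shows "\<exists>E \<in> add_span (Fsum n). \<forall>ps. length ps = n \<longrightarrow> Sl ps * E = Sl ps"
  using assms(3)
proof (induction n rule: nat_induct_non_zero)
  case 1
  obtain E where E: "E \<in> add_span (Fsum 1)" "\<forall>y. iP y * E = iP y" using P_base[OF assms(1)] assms(2) by auto
  show ?case
  proof (rule bexI[OF _ E(1)], intro allI impI)
    fix ps :: "'p list" assume "length ps = 1"
    then obtain y where "ps = [y]" by (cases ps) auto
    then show "Sl ps * E = Sl ps" using E(2) by simp
  qed
next
  case (Suc n)
  then obtain En where En: "En \<in> add_span (Fsum n)" "\<forall>ps. length ps = n \<longrightarrow> Sl ps * En = Sl ps" by blast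
  obtain E1 where E1: "E1 \<in> add_span (Fsum 1)" "\<forall>y. iP y * E1 = iP y" using P_base[OF assms(1)] assms(2) by auto
  obtain E' where E': "E' \<in> add_span (Fsum (Suc n))" "\<forall>ys y. length ys = n \<longrightarrow> Sl ys * iP y * E' = Sl ys * iP y * E1"
    using P_step[OF En Suc(1) E1(1)] by blast
  show ?case
  proof (rule bexI[OF _ E'(1)], intro allI impI)
    fix ps :: "'p list" assume l: "length ps = Suc n"
    then have ne: "ps \<noteq> []" by auto
    define ys where "ys = butlast ps"
    define y where "y = last ps"
    have ps: "ps = ys @ [y]" using ne by (simp add: ys_def y_def)
    have ly: "length ys = n" using l by (simp add: ys_def)
    then have ne': "ys \<noteq> []" using Suc(1) by auto
    have "Sl ps = Sl ys * iP y" using ne' by (simp add: ps lprod_snoc)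
    moreover have "Sl ys * iP y * E' = Sl ys * iP y" using E'(2) ly E1(2) by (simp add: mult.assoc)
    ultimately show "Sl ps * E' = Sl ps" by simp
  qed
qed

lemma eps_pos:
  assumes fs: "FS' S" and i: "0 < i"
  shows "eps S iR iQ iP i \<in> add_span (Fsum i) \<and>
     (\<forall>xs. length xs = i \<longrightarrow> eps S iR iQ iP i * Tl xs = Tl xs) \<and>
     (\<forall>ps. length ps = i \<longrightarrow> Sl ps * eps S iR iQ iP i = Sl ps)"
proof -
  obtain f \<Phi> where f: "f \<in> FPQ S" "\<forall>q. f q = q" and \<Phi>: "\<Phi> \<in> FQP S" "\<forall>p. \<Phi> p = p"
    using fs by (auto simp: FS'_def)
  let ?P = "\<lambda>e. \<exists>\<Theta>. Fpi S i iQ iP \<Theta> e \<and>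
              (\<forall>xs. length xs = i \<longrightarrow> \<Theta> xs - Poly_Mapping.single xs 1 \<in> tens_rel S i)"
  have ex: "\<exists>e. ?P e" using Q_exists[OF f i] by blast
  have epsd: "eps S iR iQ iP i = (SOME e. ?P e)" using i by (simp add: eps_def)
  define \<epsilon> where "\<epsilon> = eps S iR iQ iP i"
  have "?P \<epsilon>" unfolding \<epsilon>_def epsd by (rule someI_ex[OF ex])
  then obtain \<Theta> where th: "Fpi S i iQ iP \<Theta> \<epsilon>"
    "\<forall>xs. length xs = i \<longrightarrow> \<Theta> xs - Poly_Mapping.single xs 1 \<in> tens_rel S i" by blast
  have span: "\<epsilon> \<in> add_span (Fsum i)" by (rule Fpi_span[OF th(1)])
  have Q: "\<forall>xs. length xs = i \<longrightarrow> \<epsilon> * Tl xs = Tl xs" using eps_Q[OF th(1) th(2) i] by blast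
  obtain E where E: "E \<in> add_span (Fsum i)" "\<forall>ps. length ps = i \<longrightarrow> Sl ps * E = Sl ps"
    using P_exists[OF \<Phi> i] by blast
  have "\<epsilon> * E = \<epsilon>"
    by (rule add_span_right_id[OF _ span]) (use E(2) in \<open>auto simp: Fsum_def mult.assoc\<close>)
  moreover have "\<epsilon> * E = E"
    by (rule add_span_left_id[OF _ E(1)]) (use Q in \<open>auto simp: Fsum_def mult.assoc[symmetric]\<close>)
  ultimately have "\<epsilon> = E" by simp
  then show ?thesis using span Q E(2) unfolding \<epsilon>_def[symmetric] by simp
qed

lemma iR1_Qimg: "a \<in> Qimg iR iQ m \<Longrightarrow> iR 1 * a = a"
proof (cases "m = 0")
  case True
  assume "a \<in> Qimg iR iQ m"
  then obtain r where "a = iR r" using True by (auto simp: Qimg_def)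
  then show ?thesis using iR_mult[of 1 r] by simp
next
  case False
  assume "a \<in> Qimg iR iQ m"
  then obtain qs where "a = Tl qs" "length qs = m" using False by (auto simp: Qimg_def)
  then show ?thesis using Tl_lQ[of qs 1] False by auto
qed

lemma iR1_Pimg: "b \<in> Pimg iR iP n \<Longrightarrow> b * iR 1 = b"
proof (cases "n = 0")
  case True
  assume "b \<in> Pimg iR iP n"
  then obtain r where "b = iR r" using True by (auto simp: Pimg_def)
  then show ?thesis using iR_mult[of r 1] by simp
next
  case False
  assume "b \<in> Pimg iR iP n"
  then obtain ps where ps: "b = Sl ps" "length ps = n" using False by (auto simp: Pimg_def)
  then have ne: "ps \<noteq> []" using False by auto
  have "butlast ps @ [rP S (last ps) 1] = ps" using ne by simp
  then show ?thesis using Sl_rP[OF ne, of 1] ps by simp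
qed

lemma epsQ_img:
  assumes fs: "FS' S" and i: "0 < i" and a: "a \<in> Qimg iR iQ m" and m: "i \<le> m"
  shows "eps S iR iQ iP i * a = a"
proof -
  have m0: "m \<noteq> 0" using i m by auto
  obtain qs where qs: "a = Tl qs" "length qs = m" using a m0 by (auto simp: Qimg_def)
  have Q: "\<forall>xs. length xs = i \<longrightarrow> eps S iR iQ iP i * Tl xs = Tl xs" using eps_pos[OF fs i] by blast
  show ?thesis
  proof (cases "m = i")
    case True then show ?thesis using Q qs by simp
  next
    case False
    have "Tl qs = Tl (take i qs @ drop i qs)" by simp
    also have "\<dots> = Tl (take i qs) * Tl (drop i qs)"
      using qs False m i by (simp only: map_append, subst lprod_append) auto
    finally show ?thesis using Q qs m by (simp add: mult.assoc[symmetric])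
  qed
qed

lemma epsP_img:
  assumes fs: "FS' S" and i: "0 < i" and b: "b \<in> Pimg iR iP n" and n: "i \<le> n"
  shows "b * eps S iR iQ iP i = b"
proof -
  have n0: "n \<noteq> 0" using i n by auto
  obtain ps where ps: "b = Sl ps" "length ps = n" using b n0 by (auto simp: Pimg_def)
  have P: "\<forall>ps. length ps = i \<longrightarrow> Sl ps * eps S iR iQ iP i = Sl ps" using eps_pos[OF fs i] by blast
  show ?thesis
  proof (cases "n = i")
    case True then show ?thesis using P ps by simp
  next
    case False
    have "Sl ps = Sl (take (n-i) ps @ drop (n-i) ps)" by simp
    also have "\<dots> = Sl (take (n-i) ps) * Sl (drop (n-i) ps)"
      using ps False n i by (simp only: map_append, subst lprod_append) auto
    finally show ?thesis using P ps n by (simp add: mult.assoc)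
  qed
qed

lemma eps_left_Q: "FS' S \<Longrightarrow> a \<in> Qimg iR iQ m \<Longrightarrow> i \<le> m \<Longrightarrow> eps S iR iQ iP i * a = a"
  using epsQ_img[of i a m] iR1_Qimg[of a m] by (cases "i = 0") (auto simp: eps_def)

lemma eps_right_P: "FS' S \<Longrightarrow> b \<in> Pimg iR iP n \<Longrightarrow> i \<le> n \<Longrightarrow> b * eps S iR iQ iP i = b"
  using epsP_img[of i b n] iR1_Pimg[of b n] by (cases "i = 0") (auto simp: eps_def)

lemma eps_left_T: "FS' S \<Longrightarrow> s \<in> Tdeg iR iQ iP (int i) \<Longrightarrow> eps S iR iQ iP i * s = s"
  unfolding Tdeg_eq
proof (erule add_span_left_id[rotated])
  fix g assume fs: "FS' S" and "g \<in> Gen (int i)"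
  then obtain a b m n where g: "g = a * b" "a \<in> Qimg iR iQ m" "b \<in> Pimg iR iP n" "int m - int n = int i"
    unfolding Gen_def by blast
  then have "eps S iR iQ iP i * a = a" using eps_left_Q[OF fs g(2)] by simp
  then show "eps S iR iQ iP i * g = g" using g(1) by (simp add: mult.assoc[symmetric])
qed

lemma eps_right_T: "FS' S \<Longrightarrow> t \<in> Tdeg iR iQ iP (- int i) \<Longrightarrow> t * eps S iR iQ iP i = t"
  unfolding Tdeg_eq
proof (erule add_span_right_id[rotated])
  fix g assume fs: "FS' S" and "g \<in> Gen (- int i)"
  then obtain a b m n where g: "g = a * b" "a \<in> Qimg iR iQ m" "b \<in> Pimg iR iP n" "int m - int n = - int i"
    unfolding Gen_def by blast
  then have "b * eps S iR iQ iP i = b" using eps_right_P[OF fs g(3)] by simp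
  then show "g * eps S iR iQ iP i = g" using g(1) by (simp add: mult.assoc)
qed

lemma iR1_Tdeg0: "iR 1 \<in> Tdeg iR iQ iP 0"
proof -
  have "iR 1 * iR 1 \<in> Gen 0" unfolding Gen_def
    by (rule CollectI, rule exI[of _ "iR 1"], rule exI[of _ "iR 1"], rule exI[of _ 0], rule exI[of _ 0])
       (simp add: Qimg0 Pimg0)
  then show ?thesis using iR_mult[of 1 1] by (simp add: Tdeg_eq add_span.gen)
qed

lemma eps_in_I:
  assumes fs: "FS' S"
  shows "eps S iR iQ iP i \<in> set_prod (Tdeg iR iQ iP (int i)) (Tdeg iR iQ iP (- int i))"
proof (cases "i = 0")
  case True
  have "iR 1 * iR 1 \<in> set_prod (Tdeg iR iQ iP 0) (Tdeg iR iQ iP 0)"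
    unfolding set_prod_def using iR1_Tdeg0 by (blast intro: add_span.gen)
  then show ?thesis using True iR_mult[of 1 1] by (simp add: eps_def)
next
  case False
  then have i: "0 < i" by simp
  have span: "eps S iR iQ iP i \<in> add_span (Fsum i)" using eps_pos[OF fs i] by blast
  show ?thesis unfolding set_prod_def
  proof (rule add_span_mono_sub[OF span], rule subsetI)
    fix g assume "g \<in> Fsum i"
    then obtain qs ps where g: "g = Tl qs * Sl ps" "length qs = i" "length ps = i" by (auto simp: Fsum_def)
    have ne: "qs \<noteq> []" "ps \<noteq> []" using g i by auto
    have "Tl qs * iR 1 \<in> Gen (int i)" unfolding Gen_def
      by (rule CollectI, rule exI[of _ "Tl qs"], rule exI[of _ "iR 1"], rule exI[of _ i], rule exI[of _ 0])
         (use g(2) ne in \<open>auto simp: Qimg_def Pimg_def\<close>)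
    moreover have "Tl qs * iR 1 = Tl qs" using Tl_rQ[OF ne(1), of 1] ne by (simp add: rQ_list_def)
    ultimately have a: "Tl qs \<in> Tdeg iR iQ iP (int i)" by (simp add: Tdeg_eq add_span.gen)
    have "iR 1 * Sl ps \<in> Gen (- int i)" unfolding Gen_def
      by (rule CollectI, rule exI[of _ "iR 1"], rule exI[of _ "Sl ps"], rule exI[of _ 0], rule exI[of _ i])
         (use g(3) ne in \<open>auto simp: Qimg_def Pimg_def\<close>)
    moreover have "iR 1 * Sl ps = Sl ps" using Sl_lP[OF ne(2), of 1] ne by simp
    ultimately have b: "Sl ps \<in> Tdeg iR iQ iP (- int i)" by (simp add: Tdeg_eq add_span.gen)
    show "g \<in> add_span {x * y |x y. x \<in> Tdeg iR iQ iP (int i) \<and> y \<in> Tdeg iR iQ iP (- int i)}"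
      using a b g(1) by (blast intro: add_span.gen)
  qed
qed

lemma I_sub_T0: "x \<in> set_prod (Tdeg iR iQ iP i) (Tdeg iR iQ iP (- i)) \<Longrightarrow> x \<in> Tdeg iR iQ iP 0"
  unfolding set_prod_def Tdeg_eq[of 0]
proof (erule add_span_mono_sub, rule subsetI)
  fix g assume "g \<in> {x * y |x y. x \<in> Tdeg iR iQ iP i \<and> y \<in> Tdeg iR iQ iP (- i)}"
  then obtain x y where "g = x * y" "x \<in> Tdeg iR iQ iP i" "y \<in> Tdeg iR iQ iP (- i)" by blast
  then have "g \<in> Tdeg iR iQ iP (i + - i)" using Tdeg_mult by blast
  then show "g \<in> add_span (Gen 0)" by (simp add: Tdeg_eq)
qed

lemma I_ideal:
  assumes a: "a \<in> Tdeg iR iQ iP 0" and x: "x \<in> set_prod (Tdeg iR iQ iP i) (Tdeg iR iQ iP (- i))"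
  shows "a * x \<in> set_prod (Tdeg iR iQ iP i) (Tdeg iR iQ iP (- i)) \<and>
         x * a \<in> set_prod (Tdeg iR iQ iP i) (Tdeg iR iQ iP (- i))"
  using x unfolding set_prod_def
proof (induction x rule: add_span.induct)
  case zero then show ?case by (simp add: add_span.zero)
next
  case (gen g)
  then obtain s t where g: "g = s * t" "s \<in> Tdeg iR iQ iP i" "t \<in> Tdeg iR iQ iP (- i)" by blast
  have "a * s \<in> Tdeg iR iQ iP (0 + i)" using Tdeg_mult[OF a g(2)] .
  then have 1: "a * g = (a * s) * t \<and> a * s \<in> Tdeg iR iQ iP i" using g(1) by (simp add: mult.assoc)
  have "t * a \<in> Tdeg iR iQ iP (- i + 0)" using Tdeg_mult[OF g(3) a] .
  then have 2: "g * a = s * (t * a) \<and> t * a \<in> Tdeg iR iQ iP (- i)" using g(1) by (simp add: mult.assoc)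
  show ?case using 1 2 g by (blast intro: add_span.gen)
next
  case (add x y) then show ?case by (simp add: distrib_left distrib_right add_span.add)
next
  case (neg x) then show ?case by (simp add: add_span.neg)
qed

lemma eps_I_unit:
  assumes fs: "FS' S" and x: "x \<in> set_prod (Tdeg iR iQ iP (int i)) (Tdeg iR iQ iP (- int i))"
  shows "eps S iR iQ iP i * x = x \<and> x * eps S iR iQ iP i = x"
proof
  show "eps S iR iQ iP i * x = x"
    using x unfolding set_prod_def
    by (rule add_span_left_id[rotated]) (auto simp: eps_left_T[OF fs] mult.assoc[symmetric])
  show "x * eps S iR iQ iP i = x"
    using x unfolding set_prod_def
    by (rule add_span_right_id[rotated]) (auto simp: eps_right_T[OF fs] mult.assoc)
qed

end

theorem mainTheorem10:
  fixes S :: "('r::ring_1, 'p::ab_group_add, 'q::ab_group_add) rsys"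
    and iP :: "'p \<Rightarrow> 'b::ring" and iQ :: "'q \<Rightarrow> 'b" and iR :: "'r \<Rightarrow> 'b"
  assumes "unital_rsystem S"
    and "FS' S"
    and "toeplitz_rep S iP iQ iR TYPE('c::ring)"
  shows "\<forall>i::nat.
     (\<forall>s \<in> Tdeg iR iQ iP (int i). eps S iR iQ iP i * s = s) \<and>
     (\<forall>t \<in> Tdeg iR iQ iP (- int i). t * eps S iR iQ iP i = t) \<and>
     (let I = set_prod (Tdeg iR iQ iP (int i)) (Tdeg iR iQ iP (- int i));
          T0 = Tdeg iR iQ iP 0
      in I \<subseteq> T0 \<and>
         (\<forall>a \<in> T0. \<forall>x \<in> I. a * x \<in> I \<and> x * a \<in> I) \<and>
         eps S iR iQ iP i \<in> I \<and>
         (\<forall>x \<in> I. eps S iR iQ iP i * x = x \<and> x * eps S iR iQ iP i = x))"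
proof -
  interpret tsys S iP iQ iR
    using assms(1,3) by unfold_locales (auto simp: toeplitz_rep_def)
  show ?thesis
    unfolding Let_def
    using eps_left_T[OF assms(2)] eps_right_T[OF assms(2)] I_sub_T0 I_ideal eps_in_I[OF assms(2)]
      eps_I_unit[OF assms(2)]
    by blast
qed

end
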